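(* Let $N\ge 2$, $a\in\mathbb{R}^N$ with all $a_i\neq 0$, $\underline x<\overline x$, $\underline y<\overline y$ in $\mathbb{R}^N$, and $\mathcal{S}_a=\{(x,y)\in\mathbb{R}^N\times\mathbb{R}^N: \sum_{i=1}^N a_ix_iy_i=0,\ \underline x\le x\le\overline x,\ \underline y\le y\le\overline y\}$. Let $(x,y)$ be an extreme point of $\mathcal{S}_a$ and let $i\neq j$. Then either both $x_i\in\{\underline x_i,\overline x_i\}$ and $y_i\in\{\underline y_i,\overline y_i\}$, or both $x_j\in\{\underline x_j,\overline x_j\}$ and $y_j\in\{\underline y_j,\overline y_j\}$. *)

theory Defs
  imports "HOL-Analysis.Analysis"
begin

definition S_set :: "real^'n \<Rightarrow> real^'n \<Rightarrow> real^'n \<Rightarrow> real^'n \<Rightarrow> real^'n \<Rightarrow> ((real^'n) \<times> (real^'n)) set" where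
  "S_set a xl xu yl yu = {(x, y). (\<Sum>i\<in>UNIV. a$i * x$i * y$i) = 0 \<and>
      (\<forall>i. xl$i \<le> x$i \<and> x$i \<le> xu$i) \<and> (\<forall>i. yl$i \<le> y$i \<and> y$i \<le> yu$i)}"

end

theory Submission
  imports Defs
begin

lemma box_ev:
  fixes l z h d :: real
  assumes "l \<le> z" "z \<le> h" "d \<noteq> 0 \<Longrightarrow> l < z \<and> z < h"
  shows "\<forall>\<^sub>F t in at_right 0. l \<le> z + t*d \<and> z + t*d \<le> h \<and> l \<le> z - t*d \<and> z - t*d \<le> h"
proof (cases "d = 0")
  case True then show ?thesis using assms by simp
next
  case False
  then have lz: "l < z" "z < h" using assms by auto
  have t1: "((\<lambda>t. z + t*d) \<longlongrightarrow> z) (at_right 0)"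
    by (auto intro!: tendsto_eq_intros)
  have t2: "((\<lambda>t. z - t*d) \<longlongrightarrow> z) (at_right 0)"
    by (auto intro!: tendsto_eq_intros)
  show ?thesis
    using order_tendstoD(1)[OF t1 lz(1)] order_tendstoD(2)[OF t1 lz(2)]
      order_tendstoD(1)[OF t2 lz(1)] order_tendstoD(2)[OF t2 lz(2)]
    by eventually_elim auto
qed

lemma not_extreme:
  fixes a xl xu yl yu x y dx dy :: "real^'n"
  assumes S: "(x, y) \<in> S_set a xl xu yl yu"
    and nz: "dx \<noteq> 0 \<or> dy \<noteq> 0"
    and prod0: "\<forall>k. dx$k * dy$k = 0"
    and lin: "(\<Sum>k\<in>UNIV. a$k * (x$k * dy$k + dx$k * y$k)) = 0"
    and ix: "\<forall>k. dx$k \<noteq> 0 \<longrightarrow> xl$k < x$k \<and> x$k < xu$k"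
    and iy: "\<forall>k. dy$k \<noteq> 0 \<longrightarrow> yl$k < y$k \<and> y$k < yu$k"
  shows "\<not> (x, y) extreme_point_of S_set a xl xu yl yu"
proof -
  from S have s0: "(\<Sum>i\<in>UNIV. a$i * x$i * y$i) = 0"
    and bx: "\<forall>i. xl$i \<le> x$i \<and> x$i \<le> xu$i" and by': "\<forall>i. yl$i \<le> y$i \<and> y$i \<le> yu$i"
    by (auto simp: S_set_def)
  have ev: "\<forall>\<^sub>F t in at_right 0. 0 < t \<and> (\<forall>k.
      (xl$k \<le> x$k + t*dx$k \<and> x$k + t*dx$k \<le> xu$k \<and> xl$k \<le> x$k - t*dx$k \<and> x$k - t*dx$k \<le> xu$k) \<and>
      (yl$k \<le> y$k + t*dy$k \<and> y$k + t*dy$k \<le> yu$k \<and> yl$k \<le> y$k - t*dy$k \<and> y$k - t*dy$k \<le> yu$k))"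
  proof -
    have "\<forall>\<^sub>F t in at_right 0. \<forall>k.
      (xl$k \<le> x$k + t*dx$k \<and> x$k + t*dx$k \<le> xu$k \<and> xl$k \<le> x$k - t*dx$k \<and> x$k - t*dx$k \<le> xu$k) \<and>
      (yl$k \<le> y$k + t*dy$k \<and> y$k + t*dy$k \<le> yu$k \<and> yl$k \<le> y$k - t*dy$k \<and> y$k - t*dy$k \<le> yu$k)"
    proof (rule eventually_all_finite)
      fix k
      show "\<forall>\<^sub>F t in at_right 0.
      (xl$k \<le> x$k + t*dx$k \<and> x$k + t*dx$k \<le> xu$k \<and> xl$k \<le> x$k - t*dx$k \<and> x$k - t*dx$k \<le> xu$k) \<and>
      (yl$k \<le> y$k + t*dy$k \<and> y$k + t*dy$k \<le> yu$k \<and> yl$k \<le> y$k - t*dy$k \<and> y$k - t*dy$k \<le> yu$k)"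
        using eventually_conj[OF box_ev[of "xl$k" "x$k" "xu$k" "dx$k"] box_ev[of "yl$k" "y$k" "yu$k" "dy$k"]] bx by' ix iy
        by simp
    qed
    then show ?thesis using eventually_at_right_less[of "0::real"] by eventually_elim auto
  qed
  obtain t where t: "0 < t" "\<forall>k.
      (xl$k \<le> x$k + t*dx$k \<and> x$k + t*dx$k \<le> xu$k \<and> xl$k \<le> x$k - t*dx$k \<and> x$k - t*dx$k \<le> xu$k) \<and>
      (yl$k \<le> y$k + t*dy$k \<and> y$k + t*dy$k \<le> yu$k \<and> yl$k \<le> y$k - t*dy$k \<and> y$k - t*dy$k \<le> yu$k)"
    using eventually_happens[OF ev] by (auto simp: trivial_limit_at_right_real)
  have sumeq: "(\<Sum>k\<in>UNIV. a$k * (x$k + s*dx$k) * (y$k + s*dy$k)) = 0" for s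
  proof -
    have "(\<Sum>k\<in>UNIV. a$k * (x$k + s*dx$k) * (y$k + s*dy$k))
        = (\<Sum>k\<in>UNIV. a$k * x$k * y$k + s * (a$k * (x$k * dy$k + dx$k * y$k)) + s^2 * (a$k * (dx$k * dy$k)))"
      by (rule sum.cong) (auto simp: algebra_simps power2_eq_square)
    also have "\<dots> = 0"
    proof -
      have "(\<Sum>k\<in>UNIV. a$k * (dx$k * dy$k)) = 0" using prod0 by (intro sum.neutral) (metis mult_zero_right)
      then show ?thesis
      using s0 lin by (simp add: sum.distrib sum_distrib_left[symmetric])
    qed
    finally show ?thesis .
  qed
  define p where "p = (x + t *\<^sub>R dx, y + t *\<^sub>R dy)"
  define q where "q = (x - t *\<^sub>R dx, y - t *\<^sub>R dy)"
  have pS: "p \<in> S_set a xl xu yl yu"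
    using t sumeq[of t] by (simp add: p_def S_set_def)
  have qS: "q \<in> S_set a xl xu yl yu"
    using t sumeq[of "-t"] by (simp add: q_def S_set_def)
  have mid: "midpoint p q = (x, y)"
    by (simp add: p_def q_def midpoint_def vec_eq_iff algebra_simps)
  have "p \<noteq> q"
  proof
    assume "p = q"
    then have "t *\<^sub>R dx = 0" "t *\<^sub>R dy = 0"
      by (auto simp: p_def q_def vec_eq_iff)
    then show False using t(1) nz by simp
  qed
  then have "(x, y) \<in> open_segment p q" using mid midpoint_in_open_segment by metis
  then show ?thesis using pS qS by (auto simp: extreme_point_of_def)
qed

theorem corollary1:
  fixes a xl xu yl yu x y :: "real^'n"
  assumes "CARD('n) \<ge> 2"
    and "\<forall>i. a$i \<noteq> 0"
    and "\<forall>i. xl$i < xu$i"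
    and "\<forall>i. yl$i < yu$i"
    and "(x, y) extreme_point_of S_set a xl xu yl yu"
    and "i \<noteq> j"
  shows "(x$i \<in> {xl$i, xu$i} \<and> y$i \<in> {yl$i, yu$i}) \<or>
         (x$j \<in> {xl$j, xu$j} \<and> y$j \<in> {yl$j, yu$j})"
proof (rule ccontr)
  assume neg: "\<not> ?thesis"
  have S: "(x, y) \<in> S_set a xl xu yl yu" using assms(5) by (simp add: extreme_point_of_def)
  then have bx: "\<forall>i. xl$i \<le> x$i \<and> x$i \<le> xu$i" and by': "\<forall>i. yl$i \<le> y$i \<and> y$i \<le> yu$i"
    by (auto simp: S_set_def)
  define bi where "bi = (xl$i < x$i \<and> x$i < xu$i)"
  define bj where "bj = (xl$j < x$j \<and> x$j < xu$j)"
  have yi: "\<not> bi \<Longrightarrow> yl$i < y$i \<and> y$i < yu$i"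
    using neg bx by' unfolding bi_def by (metis insertCI order_less_le)
  have yj: "\<not> bj \<Longrightarrow> yl$j < y$j \<and> y$j < yu$j"
    using neg bx by' unfolding bj_def by (metis insertCI order_less_le)
  define ci where "ci = a$i * (if bi then y$i else x$i)"
  define cj where "cj = a$j * (if bj then y$j else x$j)"
  obtain u v :: real where uv: "u \<noteq> 0 \<or> v \<noteq> 0" "u * ci + v * cj = 0"
  proof (cases "ci = 0 \<and> cj = 0")
    case True then show ?thesis using that[of 1 0] by simp
  next
    case False then show ?thesis using that[of cj "-ci"] by (auto simp: algebra_simps)
  qed
  define dx :: "real^'n" where "dx = (\<chi> m. if m = i then (if bi then u else 0) else if m = j then (if bj then v else 0) else 0)"
  define dy :: "real^'n" where "dy = (\<chi> m. if m = i then (if bi then 0 else u) else if m = j then (if bj then 0 else v) else 0)"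
  have "\<not> (x, y) extreme_point_of S_set a xl xu yl yu"
  proof (rule not_extreme[OF S, of dx dy])
    show "dx \<noteq> 0 \<or> dy \<noteq> 0"
    proof (cases "u \<noteq> 0")
      case True then show ?thesis
        by (cases bi) (auto simp: dx_def dy_def vec_eq_iff intro!: exI[of _ i])
    next
      case False then have "v \<noteq> 0" using uv by simp
      then show ?thesis using assms(6)
        by (cases bj) (auto simp: dx_def dy_def vec_eq_iff intro!: exI[of _ j])
    qed
    show "\<forall>k. dx$k * dy$k = 0" by (simp add: dx_def dy_def)
    show "\<forall>k. dx$k \<noteq> 0 \<longrightarrow> xl$k < x$k \<and> x$k < xu$k"
      by (auto simp: dx_def bi_def bj_def split: if_splits)
    show "\<forall>k. dy$k \<noteq> 0 \<longrightarrow> yl$k < y$k \<and> y$k < yu$k"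
      using yi yj by (auto simp: dy_def split: if_splits)
    have "(\<Sum>k\<in>UNIV. a$k * (x$k * dy$k + dx$k * y$k))
        = (\<Sum>k\<in>UNIV. (if k = i then u * ci else 0) + (if k = j then v * cj else 0))"
      using assms(6) by (intro sum.cong) (auto simp: dx_def dy_def ci_def cj_def algebra_simps)
    also have "\<dots> = u * ci + v * cj" by (simp add: sum.distrib)
    finally show "(\<Sum>k\<in>UNIV. a$k * (x$k * dy$k + dx$k * y$k)) = 0" using uv by simp
  qed
  then show False using assms(5) by simp
qed

end
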